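(* Let $\mathcal V$ be a finite vocabulary, $L\ge1$, $P$ a distribution on $\mathcal V^L$, and $Q_\theta$ an autoregressive model on $\mathcal V^L$ whose conditionals $Q_\theta(\cdot\mid\mathbf x_{<l})$ are strictly positive and differentiable in the parameter $\theta$. Let $\alpha\in(0,1)\cup(1,\infty)$. For $\mathbf x\in\mathcal V^L$ and $l\in\{1,\dots,L\}$ let $\widehat P^{x_l}_{<l}$ be the point mass at $x_l$ (the $\gamma$-proxy distribution with $\gamma=1$). Then for every $\theta$, $$\nabla_\theta\,\mathbb E_{\mathbf x\sim P}\Big[\sum_{l=1}^L D_\alpha\big(\widehat P^{x_l}_{<l}\,\Vert\, Q_\theta(\cdot\mid\mathbf x_{<l})\big)\Big]=\nabla_\theta \mathcal L^\alpha_{\mathrm{cDiv}}(\theta),$$ where $\mathcal L^\alpha_{\mathrm{cDiv}}(\theta)=-\mathbb E_{\mathbf x\sim P}\big[\sum_{l=1}^L \bar Q_\theta(x_l\mid\mathbf x_{<l})^{1-\alpha}\log Q_\theta(x_l\mid\mathbf x_{<l})\big]$ and $\bar Q_\theta$ denotes $Q_\theta$ treated as a constant with respect to $\theta$ when differentiating (so $\nabla_\theta\mathcal L^\alpha_{\mathrm{cDiv}}(\theta)=-\mathbb E_{\mathbf x\sim P}[\sum_l Q_\theta(x_l\mid\mathbf x_{<l})^{1-\alpha}\nabla_\theta\log Q_\theta(x_l\mid\mathbf x_{<l})]$). That is, minimizing these conditional $\alpha$-divergences is equivalent (in the sense of identical gradients) to minimizing $\mathcal L^\alpha_{\mathrm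{cDiv}}$.
   Context: The (Tsallis) $\alpha$-divergence between distributions $p,q$ on a finite set is $D_\alpha(p\Vert q)=\frac{1}{\alpha-1}\big(\sum_{x}p(x)^\alpha q(x)^{1-\alpha}-1\big)$, with the convention $0^\alpha=0$. For $\gamma\in[0,1]$, the $\gamma$-proxy of the conditional target at position $l$ given an observed token $x_l$ is $\widehat P^{x_l}_{<l}(\cdot)=\gamma\,\mathbf 1_{\{x_l=\cdot\}}+(1-\gamma)Q_\theta(\cdot\mid\mathbf x_{<l})$. *)

theory Defs
  imports "HOL-Analysis.Analysis"
begin

text \<open>Tsallis alpha-divergence on a finite type; 0 powr a = 0 gives the convention 0^alpha = 0.\<close>
definition tsallis_div :: "real \<Rightarrow> ('v::finite \<Rightarrow> real) \<Rightarrow> ('v \<Rightarrow> real) \<Rightarrow> real" where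
  "tsallis_div \<alpha> p q = ((\<Sum>x\<in>UNIV. p x powr \<alpha> * q x powr (1 - \<alpha>)) - 1) / (\<alpha> - 1)"

definition gamma_proxy :: "real \<Rightarrow> 'v \<Rightarrow> ('v \<Rightarrow> real) \<Rightarrow> ('v \<Rightarrow> real)" where
  "gamma_proxy \<gamma> xl Qc = (\<lambda>v. \<gamma> * (if xl = v then 1 else 0) + (1 - \<gamma>) * Qc v)"

definition seq_expect :: "nat \<Rightarrow> ('v list \<Rightarrow> real) \<Rightarrow> ('v list \<Rightarrow> real) \<Rightarrow> real" where
  "seq_expect L P f = (\<Sum>xs\<in>{xs. length xs = L}. P xs * f xs)"

text \<open>Objective: expected sum of conditional alpha-divergences to the gamma-proxy.
  Positions l = 0..L-1 (0-indexed): x_l = xs!l, prefix x_{<l} = take l xs.\<close>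
definition cond_div_obj ::
  "real \<Rightarrow> real \<Rightarrow> nat \<Rightarrow> ('v::finite list \<Rightarrow> real) \<Rightarrow> ('p \<Rightarrow> 'v list \<Rightarrow> 'v \<Rightarrow> real) \<Rightarrow> 'p \<Rightarrow> real" where
  "cond_div_obj \<gamma> \<alpha> L P Q \<theta> = seq_expect L P (\<lambda>xs. \<Sum>l<L.
      tsallis_div \<alpha> (gamma_proxy \<gamma> (xs ! l) (Q \<theta> (take l xs))) (Q \<theta> (take l xs)))"

text \<open>L_cDiv with the stop-gradient factor: \<theta>0 is the frozen parameter (Q-bar),
  \<theta> the differentiated one.\<close>
definition L_cDiv ::
  "real \<Rightarrow> nat \<Rightarrow> ('v list \<Rightarrow> real) \<Rightarrow> ('p \<Rightarrow> 'v list \<Rightarrow> 'v \<Rightarrow> real) \<Rightarrow> 'p \<Rightarrow> 'p \<Rightarrow> real" where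
  "L_cDiv \<alpha> L P Q \<theta>0 \<theta> = - seq_expect L P (\<lambda>xs. \<Sum>l<L.
      Q \<theta>0 (take l xs) (xs ! l) powr (1 - \<alpha>) * ln (Q \<theta> (take l xs) (xs ! l)))"

end

theory Submission
  imports Defs
begin

lemma tsallis_point:
  fixes q :: "'v::finite \<Rightarrow> real"
  shows "tsallis_div \<alpha> (gamma_proxy 1 x q) q = (q x powr (1-\<alpha>) - 1)/(\<alpha>-1)"
proof -
  have "(\<lambda>v. gamma_proxy 1 x q v powr \<alpha> * q v powr (1-\<alpha>)) = (\<lambda>v. if v = x then q x powr (1-\<alpha>) else 0)"
    by (auto simp: fun_eq_iff gamma_proxy_def)
  then show ?thesis unfolding tsallis_div_def by (simp only:) simp
qed

lemma term1:
  fixes f :: "'p::real_normed_vector \<Rightarrow> real"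
  assumes "(f has_derivative F) (at t)" "f t > 0" "\<alpha> \<noteq> 1"
  shows "((\<lambda>s. (f s powr (1-\<alpha>) - 1)/(\<alpha>-1)) has_derivative (\<lambda>h. F h * (- (f t powr (-\<alpha>))))) (at t)"
proof -
  have d: "DERIV (\<lambda>r. (r powr (1-\<alpha>) - 1)/(\<alpha>-1)) (f t) :> - (f t powr (-\<alpha>))"
  proof -
    have e: "((1-\<alpha>) * f t powr (1-\<alpha>-1) - 0)/(\<alpha>-1) = - (f t powr (-\<alpha>))" using assms by (simp add: field_simps)
    have "DERIV (\<lambda>r. (r powr (1-\<alpha>) - 1)/(\<alpha>-1)) (f t) :> ((1-\<alpha>) * f t powr (1-\<alpha>-1) - 0)/(\<alpha>-1)"
      by (intro derivative_eq_intros) (use assms in auto)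
    then show ?thesis unfolding e .
  qed
  show ?thesis using DERIV_compose_FDERIV[OF d assms(1)] by simp
qed

lemma term2:
  fixes f :: "'p::real_normed_vector \<Rightarrow> real"
  assumes "(f has_derivative F) (at t)" "f t > 0"
  shows "((\<lambda>s. c * ln (f s)) has_derivative (\<lambda>h. c * (F h * (1 / f t)))) (at t)"
proof -
  have d: "DERIV ln (f t) :> 1 / f t" using assms by (auto intro!: derivative_eq_intros)
  show ?thesis using has_derivative_mult_right[OF DERIV_compose_FDERIV[OF d assms(1)], of c] by simp
qed

theorem theorem5p4:
  fixes L :: nat and \<alpha> :: real
    and P :: "'v::finite list \<Rightarrow> real"
    and Q :: "'p::euclidean_space \<Rightarrow> 'v list \<Rightarrow> 'v \<Rightarrow> real"
    and \<theta> :: 'p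
  assumes L_pos: "L \<ge> 1"
    and P_nonneg: "\<And>xs. length xs = L \<Longrightarrow> P xs \<ge> 0"
    and P_sum: "(\<Sum>xs\<in>{xs. length xs = L}. P xs) = 1"
    and Q_pos: "\<And>t xs v. length xs < L \<Longrightarrow> Q t xs v > 0"
    and Q_sum: "\<And>t xs. length xs < L \<Longrightarrow> (\<Sum>v\<in>UNIV. Q t xs v) = 1"
    and Q_diff: "\<And>t xs v. length xs < L \<Longrightarrow> (\<lambda>s. Q s xs v) differentiable (at t)"
    and alpha: "\<alpha> > 0" "\<alpha> \<noteq> 1"
  shows "\<exists>D. (cond_div_obj 1 \<alpha> L P Q has_derivative D) (at \<theta>)
           \<and> (L_cDiv \<alpha> L P Q \<theta> has_derivative D) (at \<theta>)"
proof -
  define S where "S = {xs::'v list. length xs = L}"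
  define F where "F xs l = (SOME D. ((\<lambda>s. Q s (take l xs) (xs!l)) has_derivative D) (at \<theta>))" for xs l
  have lenS: "length (take l xs) < L" if "xs \<in> S" "l < L" for xs l
    using that by (simp add: S_def)
  have FD: "((\<lambda>s. Q s (take l xs) (xs!l)) has_derivative F xs l) (at \<theta>)" if "xs \<in> S" "l < L" for xs l
    unfolding F_def using Q_diff[OF lenS[OF that], where t=\<theta> and v="xs!l"] unfolding differentiable_def
    by (rule someI_ex)
  define D where "D = (\<lambda>h. \<Sum>xs\<in>S. P xs * (\<Sum>l<L. F xs l h * (- (Q \<theta> (take l xs) (xs!l) powr (-\<alpha>)))))"
  define D2 where "D2 = (\<lambda>h. - (\<Sum>xs\<in>S. P xs * (\<Sum>l<L. Q \<theta> (take l xs) (xs!l) powr (1-\<alpha>) * (F xs l h * (1 / Q \<theta> (take l xs) (xs!l))))))"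
  have c1: "cond_div_obj 1 \<alpha> L P Q = (\<lambda>s. \<Sum>xs\<in>S. P xs * (\<Sum>l<L. (Q s (take l xs) (xs!l) powr (1-\<alpha>) - 1)/(\<alpha>-1)))"
    by (simp add: fun_eq_iff cond_div_obj_def seq_expect_def S_def tsallis_point)
  have c2: "L_cDiv \<alpha> L P Q \<theta> = (\<lambda>s. - (\<Sum>xs\<in>S. P xs * (\<Sum>l<L. Q \<theta> (take l xs) (xs!l) powr (1-\<alpha>) * ln (Q s (take l xs) (xs!l)))))"
    by (simp add: fun_eq_iff L_cDiv_def seq_expect_def S_def)
  have h1: "(cond_div_obj 1 \<alpha> L P Q has_derivative D) (at \<theta>)"
    unfolding c1 D_def
    by (intro has_derivative_sum has_derivative_mult_right term1[OF FD] Q_pos lenS alpha(2)) auto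
  have h2: "(L_cDiv \<alpha> L P Q \<theta> has_derivative D2) (at \<theta>)"
    unfolding c2 D2_def
    by (intro has_derivative_minus has_derivative_sum has_derivative_mult_right term2[OF FD] Q_pos lenS) auto
  have "D2 = D"
  proof
    fix h
    have "Q \<theta> (take l xs) (xs!l) powr (1-\<alpha>) * (F xs l h * (1 / Q \<theta> (take l xs) (xs!l)))
        = - (F xs l h * (- (Q \<theta> (take l xs) (xs!l) powr (-\<alpha>))))" if "xs \<in> S" "l < L" for xs l
    proof -
      have p: "Q \<theta> (take l xs) (xs!l) > 0" using Q_pos lenS[OF that] by blast
      have "Q \<theta> (take l xs) (xs!l) powr (1-\<alpha>) = Q \<theta> (take l xs) (xs!l) * Q \<theta> (take l xs) (xs!l) powr (-\<alpha>)"
        using p by (simp add: powr_diff powr_minus field_simps)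
      then show ?thesis using p by simp
    qed
    then show "D2 h = D h" unfolding D_def D2_def
      by (simp add: sum_negf[symmetric] sum_distrib_left)
  qed
  then show ?thesis using h1 h2 by blast
qed

end
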